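(* Let $p$ be a prime, $r\geq 0$ an integer, and $n\geq \sum_{k=1}^r p^k$ an integer. Then \[ B_{n-\sum_{k=1}^r p^k}\equiv B_{n,-r}\pmod p. \]
   Context: $B_n$ is the $n$-th Bell number. For any integer $s$, the $s$-Bell numbers are defined by $\sum_{n\geq0}B_{n,s}\frac{t^n}{n!}=e^{e^t-1+st}$. *)

theory Defs
  imports "HOL-Combinatorics.Stirling" "HOL-Computational_Algebra.Formal_Power_Series"
    "HOL-Computational_Algebra.Primes"
begin

definition bell :: "nat \<Rightarrow> nat" where
  "bell n = (\<Sum>k\<le>n. Stirling n k)"

definition sbell :: "nat \<Rightarrow> int \<Rightarrow> rat" where
  "sbell n s = fact n * fps_nth ((fps_exp (1::rat)) oo (fps_exp 1 - 1 + fps_const (of_int s) * fps_X)) n"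

end

theory Submission
  imports Defs "HOL-Number_Theory.Number_Theory" "HOL-Computational_Algebra.Polynomial"
begin


lemma sum_choose_Suc_split:
  fixes f :: "nat \<Rightarrow> 'a::comm_semiring_1"
  shows "(\<Sum>j\<le>Suc n. of_nat (Suc n choose j) * f j) =
         (\<Sum>j\<le>n. of_nat (n choose j) * f j) + (\<Sum>j\<le>n. of_nat (n choose j) * f (Suc j))"
proof -
  have "(\<Sum>j\<le>Suc n. of_nat (Suc n choose j) * f j) = f 0 + (\<Sum>j\<le>n. of_nat (Suc n choose Suc j) * f (Suc j))"
    by (subst sum.atMost_Suc_shift) simp
  also have "\<dots> = f 0 + (\<Sum>j\<le>n. of_nat (n choose j) * f (Suc j)) + (\<Sum>j\<le>n. of_nat (n choose Suc j) * f (Suc j))"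
    by (simp add: sum.distrib algebra_simps)
  finally have 1: "(\<Sum>j\<le>Suc n. of_nat (Suc n choose j) * f j) = f 0 + (\<Sum>j\<le>n. of_nat (n choose j) * f (Suc j)) + (\<Sum>j\<le>n. of_nat (n choose Suc j) * f (Suc j))" .
  have "f 0 + (\<Sum>j\<le>n. of_nat (n choose Suc j) * f (Suc j)) = (\<Sum>j\<le>Suc n. of_nat (n choose j) * f j)"
    by (subst sum.atMost_Suc_shift) simp
  also have "\<dots> = (\<Sum>j\<le>n. of_nat (n choose j) * f j)" by (simp add: binomial_eq_0)
  finally have 2: "f 0 + (\<Sum>j\<le>n. of_nat (n choose Suc j) * f (Suc j)) = (\<Sum>j\<le>n. of_nat (n choose j) * f j)" .
  show ?thesis unfolding 1 2[symmetric] by (simp only: ac_simps)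
qed

lemma Stirling_sum: "Stirling (Suc n) (Suc k) = (\<Sum>j\<le>n. (n choose j) * Stirling j k)"
proof (induction n arbitrary: k)
  case 0
  then show ?case by (cases k) auto
next
  case (Suc n)
  have split: "(\<Sum>j\<le>Suc n. (Suc n choose j) * Stirling j k) =
     (\<Sum>j\<le>n. (n choose j) * Stirling j k) + (\<Sum>j\<le>n. (n choose j) * Stirling (Suc j) k)"
    using sum_choose_Suc_split[of n "\<lambda>j. Stirling j k"] by simp
  show ?case
  proof (cases k)
    case 0
    then show ?thesis using split Suc.IH[of 0] by simp
  next
    case (Suc k')
    have "(\<Sum>j\<le>n. (n choose j) * Stirling (Suc j) k) =
       k * (\<Sum>j\<le>n. (n choose j) * Stirling j k) + (\<Sum>j\<le>n. (n choose j) * Stirling j k')"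
      by (simp add: Suc sum_distrib_left sum.distrib algebra_simps)
    then show ?thesis using split Suc.IH[of k] Suc.IH[of k'] Suc by simp
  qed
qed

lemma bell_Suc: "bell (Suc n) = (\<Sum>k\<le>n. (n choose k) * bell k)"
proof -
  have "bell (Suc n) = (\<Sum>k\<le>n. Stirling (Suc n) (Suc k))"
    unfolding bell_def by (subst sum.atMost_Suc_shift) simp
  also have "\<dots> = (\<Sum>k\<le>n. \<Sum>j\<le>n. (n choose j) * Stirling j k)"
    by (simp only: Stirling_sum)
  also have "\<dots> = (\<Sum>j\<le>n. (n choose j) * (\<Sum>k\<le>n. Stirling j k))"
    by (subst sum.swap) (simp add: sum_distrib_left)
  also have "\<dots> = (\<Sum>j\<le>n. (n choose j) * bell j)"
  proof (rule sum.cong[OF refl])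
    fix j assume "j \<in> {..n}"
    then have "j \<le> n" by simp
    have "(\<Sum>k\<le>n. Stirling j k) = (\<Sum>k\<le>j. Stirling j k)"
      by (rule sum.mono_neutral_right) (use \<open>j \<le> n\<close> in auto)
    then show "(n choose j) * (\<Sum>k\<le>n. Stirling j k) = (n choose j) * bell j"
      by (simp add: bell_def)
  qed
  finally show ?thesis .
qed


unbundle fps_syntax

lemma sbell_0: "sbell 0 c = 1"
  by (simp add: sbell_def)

lemma sbell_Suc: "sbell (Suc n) c = (\<Sum>k\<le>n. of_nat (n choose k) * sbell k c) + of_int c * sbell n c"
proof -
  define H :: "rat fps" where "H = fps_exp 1 - 1 + fps_const (of_int c) * fps_X"
  define G where "G = fps_exp (1::rat) oo H"
  have h0: "H $ 0 = 0" by (simp add: H_def)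
  have d: "fps_deriv G = G * (fps_exp 1 + fps_const (of_int c))"
    unfolding G_def fps_compose_deriv[OF h0] by (simp add: H_def)
  have "fps_deriv G $ n = (G * (fps_exp 1 + fps_const (of_int c))) $ n" by (simp only: d)
  moreover have aux: "\<And>i x. G $ i * (if n = i then x else 0) = (if n = i then G $ i * x else 0)" by simp
  ultimately have e: "of_nat (Suc n) * G $ Suc n = (\<Sum>i=0..n. G $ i * (1 / fact (n - i))) + of_int c * G $ n"
    by (simp add: fps_mult_nth algebra_simps sum.distrib fps_const_add[symmetric] sum_distrib_left aux
         del: fps_const_add)
  have "sbell (Suc n) c = fact n * (of_nat (Suc n) * G $ Suc n)"
    by (simp add: sbell_def G_def H_def)
  also have "\<dots> = (\<Sum>i=0..n. fact n / fact (n - i) * G $ i) + of_int c * (fact n * G $ n)"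
    unfolding e by (simp add: sum_distrib_left algebra_simps)
  also have "(\<Sum>i=0..n. fact n / fact (n - i) * G $ i) = (\<Sum>k\<le>n. of_nat (n choose k) * sbell k c)"
    unfolding atLeast0AtMost
  proof (rule sum.cong[OF refl])
    fix k assume "k \<in> {..n}"
    then have "k \<le> n" by simp
    then show "fact n / fact (n - k) * G $ k = of_nat (n choose k) * sbell k c"
      by (simp add: sbell_def G_def H_def binomial_fact)
  qed
  finally show ?thesis by (simp add: sbell_def G_def H_def)
qed



definition Lb :: "int poly \<Rightarrow> int" where
  "Lb f = (\<Sum>i\<le>degree f. coeff f i * int (bell i))"

lemma Lb_le: "degree f \<le> N \<Longrightarrow> Lb f = (\<Sum>i\<le>N. coeff f i * int (bell i))"
  unfolding Lb_def by (rule sum.mono_neutral_left) (auto simp: coeff_eq_0)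

lemma Lb_add: "Lb (f + g) = Lb f + Lb g"
proof -
  define N where "N = max (degree f) (degree g)"
  have "degree (f + g) \<le> N" unfolding N_def by (rule degree_add_le) auto
  then show ?thesis
    using Lb_le[of f N] Lb_le[of g N] Lb_le[of "f+g" N]
    by (simp add: N_def sum.distrib algebra_simps)
qed

lemma Lb_smult: "Lb (smult c f) = c * Lb f"
  using Lb_le[of "smult c f" "degree f"] by (simp add: Lb_def sum_distrib_left algebra_simps)

lemma Lb_0 [simp]: "Lb 0 = 0" by (simp add: Lb_def)

lemma Lb_minus: "Lb (- f) = - Lb f"
  using Lb_smult[of "-1" f] by simp

lemma Lb_diff: "Lb (f - g) = Lb f - Lb g"
  using Lb_add[of f "-g"] Lb_minus[of g] by simp

lemma Lb_sum: "Lb (\<Sum>i\<in>A. f i) = (\<Sum>i\<in>A. Lb (f i))"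
  by (induction A rule: infinite_finite_induct) (auto simp: Lb_add)

lemma Lb_monom: "Lb (monom c n) = c * int (bell n)"
proof -
  have "Lb (monom c n) = (\<Sum>i\<le>n. (if n = i then c else 0) * int (bell i))"
    using Lb_le[of "monom c n" n] by (simp add: degree_monom_le coeff_monom)
  also have "\<dots> = (\<Sum>i\<le>n. (if i = n then c * int (bell i) else 0))"
    by (rule sum.cong) auto
  finally show ?thesis by simp
qed

lemma Lb_Xpow: "Lb ([:0,1:] ^ n) = int (bell n)"
  using Lb_monom[of 1 n] by (simp add: monom_altdef)

lemma pcompose_power: "pcompose (p ^ n) q = (pcompose p q) ^ n"
  by (induction n) (simp_all add: pcompose_mult pcompose_1)

lemma Lb_shift_monom: "Lb ([:0,1:] * monom c i) = Lb (pcompose (monom c i) [:1,1:])"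
proof -
  have "Lb ([:0,1:] * monom c i) = c * int (bell (Suc i))"
    by (simp add: monom_Suc[symmetric] Lb_monom)
  also have "\<dots> = c * (\<Sum>k\<le>i. of_nat (i choose k) * int (bell k))"
    by (simp add: bell_Suc)
  also have "(\<Sum>k\<le>i. of_nat (i choose k) * int (bell k)) = Lb ([:1,1:] ^ i)"
  proof -
    have "[:1,1:] ^ i = ([:0,1:] + 1 :: int poly) ^ i" by (simp add: one_pCons)
    also have "\<dots> = (\<Sum>k\<le>i. monom (of_nat (i choose k)) k)"
      by (simp add: binomial_ring monom_altdef of_nat_poly)
    finally show ?thesis by (simp add: Lb_sum Lb_monom)
  qed
  finally show ?thesis
    by (simp add: monom_altdef pcompose_smult pcompose_power Lb_smult pcompose_pCons)
qed

lemma Lb_shift: "Lb ([:0,1:] * f) = Lb (pcompose f [:1,1:])"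
proof -
  have "Lb ([:0,1:] * f) = Lb ([:0,1:] * (\<Sum>i\<le>degree f. monom (coeff f i) i))"
    by (simp add: poly_as_sum_of_monoms)
  also have "\<dots> = (\<Sum>i\<le>degree f. Lb ([:0,1:] * monom (coeff f i) i))"
    by (simp add: sum_distrib_left Lb_sum)
  also have "\<dots> = (\<Sum>i\<le>degree f. Lb (pcompose (monom (coeff f i) i) [:1,1:]))"
    by (intro sum.cong refl Lb_shift_monom)
  also have "\<dots> = Lb (pcompose (\<Sum>i\<le>degree f. monom (coeff f i) i) [:1,1:])"
    by (simp add: pcompose_sum Lb_sum)
  finally show ?thesis by (simp add: poly_as_sum_of_monoms)
qed



lemma Lb_shift': "Lb (pCons 0 f) = Lb (pcompose f [:1,1:])"
  using Lb_shift[of f] by simp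

lemma of_nat_mult_poly: "(of_nat m :: int poly) * P = smult (of_nat m) P"
  by (simp add: of_nat_poly)

lemma Lb_lin_Suc:
  "Lb ([:c,1:] ^ Suc n) = (\<Sum>k\<le>n. of_nat (n choose k) * Lb ([:c,1:] ^ k)) + c * Lb ([:c,1:] ^ n)"
proof -
  have "[:c,1:] ^ Suc n = pCons 0 ([:c,1:] ^ n) + smult c ([:c,1:] ^ n)" by simp
  then have "Lb ([:c,1:] ^ Suc n) = Lb (pcompose ([:c,1:] ^ n) [:1,1:]) + c * Lb ([:c,1:] ^ n)"
    by (simp only: Lb_add Lb_smult Lb_shift')
  moreover have "pcompose ([:c,1:] ^ n) [:1,1:] = ([:c,1:] + 1) ^ n"
    by (simp add: pcompose_power pcompose_pCons one_pCons)
  moreover have "([:c,1:] + 1) ^ n = (\<Sum>k\<le>n. smult (of_nat (n choose k)) ([:c,1:] ^ k))"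
    by (simp add: binomial_ring of_nat_mult_poly)
  ultimately show ?thesis by (simp add: Lb_sum Lb_smult)
qed

lemma bell_0: "bell 0 = 1" by (simp add: bell_def)

lemma sbell_Lb: "sbell n c = of_int (Lb ([:c,1:] ^ n))"
proof (induction n rule: nat_less_induct)
  case (1 n)
  show ?case
  proof (cases n)
    case 0
    then show ?thesis using Lb_Xpow[of 0] by (simp add: sbell_0 bell_0)
  next
    case (Suc m)
    have "sbell n c = (\<Sum>k\<le>m. of_nat (m choose k) * sbell k c) + of_int c * sbell m c"
      using Suc sbell_Suc by simp
    also have "\<dots> = (\<Sum>k\<le>m. of_nat (m choose k) * of_int (Lb ([:c,1:] ^ k))) + of_int c * of_int (Lb ([:c,1:] ^ m))"
      using 1 Suc by simp
    also have "\<dots> = of_int (Lb ([:c,1:] ^ n))"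
      using Suc Lb_lin_Suc[of c m] by simp
    finally show ?thesis .
  qed
qed



definition ff :: "nat \<Rightarrow> int poly" where
  "ff m = (\<Prod>j<m. [:- of_nat j, 1:])"

lemma ff_Suc: "ff (Suc m) = pCons 0 (pcompose (ff m) [:-1,1:])"
proof -
  have "ff (Suc m) = [:0,1:] * (\<Prod>j<m. [:- of_nat (Suc j), 1:])"
    unfolding ff_def by (subst prod.lessThan_Suc_shift) simp
  also have "(\<Prod>j<m. [:- of_nat (Suc j), 1:]) = pcompose (ff m) [:-1,1:]"
    unfolding ff_def pcompose_prod by (intro prod.cong refl) (simp add: pcompose_pCons algebra_simps)
  finally show ?thesis by simp
qed

lemma Lb_ff: "Lb (ff m * f) = Lb (pcompose f [:of_nat m, 1:])"
proof (induction m arbitrary: f)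
  case 0
  then show ?case by (simp add: ff_def)
next
  case (Suc m)
  have a: "pcompose (pcompose (ff m) [:-1,1:]) [:1,1:] = ff m"
    by (simp add: pcompose_assoc[symmetric] pcompose_pCons)
  have b: "pcompose (pcompose f [:1,1:]) [:of_nat m,1:] = pcompose f [:of_nat (Suc m), 1:]"
    by (simp add: pcompose_assoc[symmetric] pcompose_pCons algebra_simps)
  have "Lb (ff (Suc m) * f) = Lb (pCons 0 (pcompose (ff m) [:-1,1:] * f))"
    by (simp add: ff_Suc)
  also have "\<dots> = Lb (ff m * pcompose f [:1,1:])"
    by (simp add: Lb_shift' pcompose_mult a)
  also have "\<dots> = Lb (pcompose f [:of_nat (Suc m), 1:])"
    using Suc.IH b by simp
  finally show ?case .
qed

definition cg :: "nat \<Rightarrow> int poly \<Rightarrow> int poly \<Rightarrow> bool" where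
  "cg p f g \<longleftrightarrow> (\<forall>h. int p dvd Lb (h * (f - g)))"

lemma cg_refl: "cg p f f" by (simp add: cg_def)

lemma cg_sym: "cg p f g \<Longrightarrow> cg p g f"
  unfolding cg_def
proof
  fix h assume "\<forall>h. int p dvd Lb (h * (f - g))"
  then have "int p dvd Lb ((-h) * (f - g))" by blast
  then show "int p dvd Lb (h * (g - f))" by (simp add: algebra_simps)
qed

lemma cg_trans: "cg p f g \<Longrightarrow> cg p g k \<Longrightarrow> cg p f k"
  unfolding cg_def
proof
  fix h assume "\<forall>h. int p dvd Lb (h * (f - g))" "\<forall>h. int p dvd Lb (h * (g - k))"
  then have "int p dvd Lb (h * (f - g)) + Lb (h * (g - k))" by (blast intro: dvd_add)
  also have "Lb (h * (f - g)) + Lb (h * (g - k)) = Lb (h * (f - k))"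
    by (simp add: Lb_add[symmetric] algebra_simps)
  finally show "int p dvd Lb (h * (f - k))" .
qed

lemma cg_add: "cg p f g \<Longrightarrow> cg p f' g' \<Longrightarrow> cg p (f + f') (g + g')"
  unfolding cg_def
proof
  fix h assume "\<forall>h. int p dvd Lb (h * (f - g))" "\<forall>h. int p dvd Lb (h * (f' - g'))"
  then have "int p dvd Lb (h * (f - g)) + Lb (h * (f' - g'))" by (blast intro: dvd_add)
  also have "Lb (h * (f - g)) + Lb (h * (f' - g')) = Lb (h * (f + f' - (g + g')))"
    by (simp add: Lb_add[symmetric] algebra_simps)
  finally show "int p dvd Lb (h * (f + f' - (g + g')))" .
qed

lemma cg_mult_right: "cg p f g \<Longrightarrow> cg p (f * k) (g * k)"
  unfolding cg_def
proof
  fix h assume "\<forall>h. int p dvd Lb (h * (f - g))"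
  then have "int p dvd Lb ((h * k) * (f - g))" by blast
  then show "int p dvd Lb (h * (f * k - g * k))" by (simp add: algebra_simps)
qed

lemma cg_mult: "cg p f g \<Longrightarrow> cg p f' g' \<Longrightarrow> cg p (f * f') (g * g')"
  using cg_mult_right[of p f g f'] cg_mult_right[of p f' g' g]
  by (metis cg_trans mult.commute)

lemma cg_power: "cg p f g \<Longrightarrow> cg p (f ^ n) (g ^ n)"
  by (induction n) (simp_all add: cg_refl cg_mult)

lemma cg_dvd: "[:int p:] dvd (f - g) \<Longrightarrow> cg p f g"
  unfolding cg_def
proof
  fix h assume "[:int p:] dvd (f - g)"
  then obtain G where "f - g = [:int p:] * G" by (elim dvdE)
  then have "h * (f - g) = smult (int p) (h * G)" by simp
  then show "int p dvd Lb (h * (f - g))" by (simp add: Lb_smult)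
qed

lemma cg_shift1: "cg p f g \<Longrightarrow> cg p (pcompose f [:1,1:]) (pcompose g [:1,1:])"
  unfolding cg_def
proof
  fix h :: "int poly" assume A: "\<forall>h. int p dvd Lb (h * (f - g))"
  define k where "k = pcompose h [:-1,1:]"
  have e: "pcompose [:-1,1:] [:1,1:] = ([:0,1:] :: int poly)" by (simp add: pcompose_pCons)
  have hk: "h = pcompose k [:1,1:]"
    unfolding k_def pcompose_assoc[symmetric] e by simp
  have "h * (pcompose f [:1,1:] - pcompose g [:1,1:]) = pcompose (k * (f - g)) [:1,1:]"
    by (simp add: hk pcompose_mult pcompose_diff)
  then have "Lb (h * (pcompose f [:1,1:] - pcompose g [:1,1:])) = Lb (([:0,1:] * k) * (f - g))"
    by (simp add: Lb_shift'[symmetric])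
  moreover have "int p dvd Lb (([:0,1:] * k) * (f - g))" using A by blast
  ultimately show "int p dvd Lb (h * (pcompose f [:1,1:] - pcompose g [:1,1:]))"
    by simp
qed

lemma cg_shift: "cg p f g \<Longrightarrow> cg p (pcompose f [:of_nat m,1:]) (pcompose g [:of_nat m,1:])"
proof (induction m)
  case 0
  then show ?case by simp
next
  case (Suc m)
  have e: "\<And>f. pcompose f [:of_nat (Suc m),1:] = pcompose (pcompose f [:of_nat m,1:]) [:1,1:]"
    by (simp add: pcompose_assoc[symmetric] pcompose_pCons algebra_simps)
  show ?case unfolding e using Suc by (intro cg_shift1) simp
qed

lemma cg_comp: "cg p f g \<Longrightarrow> cg p (pcompose h f) (pcompose h g)"
proof (induction h)
  case 0
  then show ?case by (simp add: cg_refl)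
next
  case (pCons a h)
  then show ?case by (simp add: pcompose_pCons cg_add cg_mult cg_refl)
qed

lemma cg_touchard:
  assumes "[:int p:] dvd (ff p - [:0,1:] ^ p + [:0,1:])"
  shows "cg p ([:0,1:] ^ p) [:1,1:]"
  unfolding cg_def
proof
  fix h
  define D where "D = ff p - [:0,1:] ^ p + [:0,1:]"
  have c1: "cg p (pcompose h [:int p,1:]) (pcompose h [:0,1:])"
    by (rule cg_comp, rule cg_dvd) simp
  have "int p dvd Lb (1 * (pcompose h [:int p,1:] - pcompose h [:0,1:]))"
    using c1 unfolding cg_def by blast
  then have d1: "int p dvd Lb (h * (ff p - 1))"
    by (simp add: Lb_diff algebra_simps Lb_ff[of p h, simplified mult.commute])
  have "cg p D 0" using assms by (intro cg_dvd) (simp add: D_def)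
  then have d2: "int p dvd Lb (h * D)" unfolding cg_def by (metis diff_zero)
  have "h * ([:0,1:] ^ p - [:1,1:]) = h * (ff p - 1) - h * D"
    by (simp add: D_def algebra_simps one_pCons)
  then show "int p dvd Lb (h * ([:0,1:] ^ p - [:1,1:]))"
    using d1 d2 by (simp add: Lb_diff)
qed



lemma lagrange_modp:
  fixes D :: "int poly"
  assumes p: "prime p" and "finite A"
    and "\<forall>a\<in>A. \<forall>b\<in>A. a \<noteq> b \<longrightarrow> \<not> int p dvd (a - b)"
    and "degree D < card A" and "\<forall>a\<in>A. int p dvd poly D a"
  shows "[:int p:] dvd D"
  using assms(2-)
proof (induction A arbitrary: D rule: finite_induct)
  case empty
  then show ?case by simp
next
  case (insert a A)
  show ?case
  proof (cases "degree D = 0")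
    case True
    then obtain c where c: "D = [:c:]" by (elim degree_eq_zeroE)
    have "int p dvd poly D a" using insert.prems(3) by simp
    then have "int p dvd c" using c by simp
    then show ?thesis using c by simp
  next
    case False
    define Q where "Q = synthetic_div D a"
    have DQ: "D = [:-a,1:] * Q + [:poly D a:]"
      unfolding Q_def by (rule synthetic_div_correct'[symmetric])
    have degQ: "degree Q < card A"
      using insert.prems(2) insert.hyps False by (simp add: Q_def degree_synthetic_div)
    have "\<forall>b\<in>A. int p dvd poly Q b"
    proof
      fix b assume b: "b \<in> A"
      then have ab: "a \<noteq> b" using insert.hyps by auto
      have "poly D b = (b - a) * poly Q b + poly D a"
        by (subst DQ) (simp add: algebra_simps)
      moreover have "int p dvd poly D b" "int p dvd poly D a" using insert.prems b by auto
      ultimately have "int p dvd (b - a) * poly Q b"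
        by (metis dvd_add_left_iff add.commute)
      moreover have "\<not> int p dvd (b - a)" using insert.prems(1) b ab by auto
      moreover have "prime (int p)" using p by simp
      ultimately show "int p dvd poly Q b" using prime_dvd_mult_iff by blast
    qed
    then have "[:int p:] dvd Q"
      using insert.IH[of Q] insert.prems degQ by auto
    moreover have "[:int p:] dvd [:poly D a:]" using insert.prems by simp
    ultimately have "[:int p:] dvd [:-a,1:] * Q + [:poly D a:]" by (intro dvd_add dvd_mult)
    then show ?thesis by (simp only: DQ[symmetric])
  qed
qed

lemma ff_deg: "degree (ff m) = m \<and> poly.coeff (ff m) m = 1"
proof (induction m)
  case 0
  then show ?case by (simp add: ff_def)
next
  case (Suc m)
  have e: "ff (Suc m) = ff m * [:- of_nat m, 1:]" by (simp add: ff_def)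
  have nz: "ff m \<noteq> 0" using Suc by auto
  have d: "degree (ff (Suc m)) = Suc m"
    unfolding e using Suc nz by (subst degree_mult_eq) auto
  have "poly.coeff (ff (Suc m)) (Suc m) = poly.coeff (ff m * [:- of_nat m, 1:]) (degree (ff m) + degree ([:- of_nat m, 1:] :: int poly))"
  proof -
    have ds: "degree (ff m) + degree ([:- of_nat m, 1:] :: int poly) = Suc m" using Suc by simp
    show ?thesis by (simp only: ds e)
  qed
  also have "\<dots> = lead_coeff (ff m) * lead_coeff ([:- of_nat m, 1:] :: int poly)"
    by (rule coeff_mult_degree_sum)
  also have "\<dots> = 1" using Suc by simp
  finally show ?case using d by simp
qed

lemma fermat_int:
  assumes "prime p" "k < p"
  shows "int p dvd int k ^ p - int k"
proof (cases "k = 0")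
  case True
  then show ?thesis using assms prime_gt_0_nat[of p] by (simp add: power_0_left)
next
  case False
  then have "\<not> p dvd k" using assms(2) by (auto dest: dvd_imp_le)
  then have "[k ^ (p - 1) = 1] (mod p)" by (rule fermat_theorem[OF assms(1)])
  then have "[k ^ (p - 1) * k = 1 * k] (mod p)" by (rule cong_mult) simp
  moreover have "k ^ (p - 1) * k = k ^ p"
    using prime_gt_0_nat[OF assms(1)] by (simp add: power_Suc2[symmetric])
  ultimately have "[k ^ p = k] (mod p)" by simp
  then have "[int k ^ p = int k] (mod int p)" by (simp add: cong_int_iff[symmetric])
  then show ?thesis by (simp add: cong_iff_dvd_diff)
qed

lemma ff_modp:
  assumes p: "prime p"
  shows "[:int p:] dvd (ff p - [:0,1:] ^ p + [:0,1:])"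
proof (rule lagrange_modp[OF p, of "int ` {0..<p}"])
  have p2: "p \<ge> 2" using p by (rule prime_ge_2_nat)
  show "finite (int ` {0..<p})" by simp
  show "\<forall>a\<in>int ` {0..<p}. \<forall>b\<in>int ` {0..<p}. a \<noteq> b \<longrightarrow> \<not> int p dvd a - b"
  proof (intro ballI impI notI)
    fix a b assume a: "a \<in> int ` {0..<p}" and b: "b \<in> int ` {0..<p}" and ab: "a \<noteq> b" and d: "int p dvd a - b"
    obtain x y where xy: "a = int x" "b = int y" "x < p" "y < p" using a b by auto
    have "[int x = int y] (mod int p)" using d xy by (simp add: cong_iff_dvd_diff)
    then have "[x = y] (mod p)" by (simp add: cong_int_iff)
    then have "x = y" using xy by (simp add: cong_def)
    then show False using ab xy by simp
  qed
  have "card (int ` {0..<p}) = p" by (simp add: card_image)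
  moreover have "degree (ff p - [:0,1:] ^ p + [:0,1:]) \<le> p - 1"
  proof (rule degree_le, intro allI impI)
    fix i assume "p - 1 < i"
    then have i: "p \<le> i" by simp
    have c1: "poly.coeff (ff p) i = (if i = p then 1 else 0)"
      using ff_deg[of p] i by (auto simp: coeff_eq_0)
    have xm: "([:0,1:] ^ p :: int poly) = monom 1 p" by (simp add: monom_altdef)
    have c2: "poly.coeff ([:0,1:] ^ p :: int poly) i = (if i = p then 1 else 0)"
      unfolding xm by (simp add: coeff_monom)
    have c3: "poly.coeff ([:0,1:] :: int poly) i = 0" using i p2 by (simp add: coeff_pCons split: nat.split)
    show "poly.coeff (ff p - [:0,1:] ^ p + [:0,1:]) i = 0" using c1 c2 c3 by simp
  qed
  ultimately show "degree (ff p - [:0,1:] ^ p + [:0,1:]) < card (int ` {0..<p})"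
    using p2 by simp
  show "\<forall>a\<in>int ` {0..<p}. int p dvd poly (ff p - [:0,1:] ^ p + [:0,1:]) a"
  proof
    fix a assume "a \<in> int ` {0..<p}"
    then obtain k where k: "a = int k" "k < p" by auto
    have "poly (ff p) a = 0"
      unfolding ff_def poly_prod using k by (auto intro: prod_zero)
    then have "poly (ff p - [:0,1:] ^ p + [:0,1:]) a = - (int k ^ p - int k)"
      using k by simp
    then show "int p dvd poly (ff p - [:0,1:] ^ p + [:0,1:]) a"
      using fermat_int[OF p k(2)] by (simp only: dvd_minus_iff)
  qed
qed



lemma cg_step:
  assumes p: "prime p"
  shows "cg p ([:d,1:] ^ p) [:d + 1, 1:]"
proof -
  have p0: "p > 0" using p by (simp add: prime_gt_0_nat)
  define d' where "d' = nat (d mod int p)"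
  have d'i: "int d' = d mod int p" unfolding d'_def using p0 by simp
  have dd: "int p dvd d - int d'" unfolding d'i by (rule dvd_minus_mod)
  have e1: "cg p [:d,1:] [:int d',1:]"
    by (rule cg_dvd) (use dd in simp)
  have e2: "cg p [:int d' + 1,1:] [:d + 1,1:]"
    by (rule cg_dvd) (use dd in \<open>simp add: dvd_diff_commute\<close>)
  have t: "cg p ([:0,1:] ^ p) [:1,1:]" by (rule cg_touchard[OF ff_modp[OF p]])
  have "cg p (pcompose ([:0,1:] ^ p) [:of_nat d',1:]) (pcompose [:1,1:] [:of_nat d',1:])"
    by (rule cg_shift[OF t])
  then have e3: "cg p ([:int d',1:] ^ p) [:int d' + 1,1:]"
    by (simp add: pcompose_power pcompose_pCons algebra_simps)
  show ?thesis
    using cg_power[OF e1, of p] e3 e2 by (blast intro: cg_trans)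
qed

lemma cg_pow_pk:
  assumes p: "prime p"
  shows "cg p ([:c,1:] ^ (p ^ k)) [:c + of_nat k, 1:]"
proof (induction k arbitrary: c)
  case 0
  then show ?case by (simp add: cg_refl)
next
  case (Suc k)
  have "[:c,1:] ^ (p ^ Suc k) = ([:c,1:] ^ (p ^ k)) ^ p"
    by (simp add: power_mult[symmetric] mult.commute)
  moreover have "cg p (([:c,1:] ^ (p ^ k)) ^ p) ([:c + of_nat k, 1:] ^ p)"
    by (rule cg_power[OF Suc.IH])
  moreover have "cg p ([:c + of_nat k, 1:] ^ p) [:c + of_nat k + 1, 1:]"
    by (rule cg_step[OF p])
  ultimately show ?case by (auto intro: cg_trans simp: algebra_simps)
qed

lemma cg_pow_S:
  assumes p: "prime p"
  shows "cg p ([:c,1:] ^ (\<Sum>k=1..r. p ^ k)) (\<Prod>k=1..r. [:c + of_nat k, 1:])"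
proof (induction r)
  case 0
  then show ?case by (simp add: cg_refl)
next
  case (Suc r)
  have "[:c,1:] ^ (\<Sum>k=1..Suc r. p ^ k) = [:c,1:] ^ (\<Sum>k=1..r. p ^ k) * [:c,1:] ^ (p ^ Suc r)"
    by (simp add: power_add)
  moreover have "(\<Prod>k=1..Suc r. [:c + of_nat k, 1:]) = (\<Prod>k=1..r. [:c + of_nat k, 1:]) * [:c + of_nat (Suc r), 1:]"
    by simp
  ultimately show ?case
    using cg_mult[OF Suc.IH cg_pow_pk[OF p, of c "Suc r"]] by simp
qed

lemma prod_ff: "(\<Prod>k=1..r. [:- int r + of_nat k, 1:]) = ff r"
  unfolding ff_def
  by (rule prod.reindex_bij_witness[where i="\<lambda>k. r - k" and j="\<lambda>j. r - j"]) auto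

theorem corollary4:
  fixes p r n :: nat
  assumes "prime p"
    and "n \<ge> (\<Sum>k=1..r. p ^ k)"
  shows "(of_nat (bell (n - (\<Sum>k=1..r. p ^ k))) - sbell n (- int r)) / of_nat p \<in> \<int>"
proof -
  define S where "S = (\<Sum>k=1..r. p ^ k)"
  define m where "m = n - S"
  have n: "n = m + S" using assms(2) by (simp add: m_def S_def)
  define A where "A = ([:- int r, 1:] ^ m :: int poly)"
  have key: "cg p ([:- int r,1:] ^ S) (ff r)"
    unfolding S_def using cg_pow_S[OF assms(1), of "- int r" r] unfolding prod_ff .
  then have d: "int p dvd Lb (A * ([:- int r,1:] ^ S - ff r))"
    unfolding cg_def by blast
  have "Lb (A * ff r) = Lb (ff r * A)" by (simp add: mult.commute)
  also have "\<dots> = Lb (pcompose A [:of_nat r, 1:])" by (rule Lb_ff)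
  also have "pcompose A [:of_nat r, 1:] = [:0,1:] ^ m"
    by (simp add: A_def pcompose_power pcompose_pCons)
  finally have l2: "Lb (A * ff r) = int (bell m)" by (simp add: Lb_Xpow)
  have l1: "Lb ([:- int r,1:] ^ n) = Lb (A * [:- int r,1:] ^ S)"
    by (simp add: n A_def power_add)
  have dv: "int p dvd Lb ([:- int r,1:] ^ n) - int (bell m)"
    using d l1 l2 by (simp add: algebra_simps Lb_diff)
  then obtain q where q: "Lb ([:- int r,1:] ^ n) - int (bell m) = int p * q" by (elim dvdE)
  have p0: "p > 0" using assms(1) by (simp add: prime_gt_0_nat)
  have "(of_nat (bell m) - sbell n (- int r)) / of_nat p = (of_int (- q) :: rat)"
  proof -
    have "of_nat (bell m) - sbell n (- int r) = of_int (int (bell m) - Lb ([:- int r,1:] ^ n))"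
      by (simp add: sbell_Lb)
    also have "\<dots> = of_int (int p * (- q))" using q by (simp add: algebra_simps)
    finally show ?thesis using p0 by simp
  qed
  then show ?thesis unfolding m_def S_def by simp
qed

end
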